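(* Let $2\le k\le d$ and let $P\subset\mathbb{R}^d$ be a finite point set with properties $a_1,\dots,a_k\colon P\to\{-1,1\}$, each strictly linearly separable on $P$, such that all $2^k$ possible labels occur in $P$. For $i=2,\dots,k$ let $H_i$ be a hyperplane strictly separating $P^i_-$ from $P^i_+$, with normal vector $v_i$. Assume general position in the following sense: $v_2,\dots,v_k$ are linearly independent; any at most $d+1$ points of $P$ are affinely independent; and, writing $T$ for the orthogonal projection of $\mathbb{R}^d$ onto $A=\mathrm{span}(v_2,\dots,v_k)$, the images under $T$ of any at most $k$ points of $P$ are affinely independent. Then there is a unit vector $w$ with $w\cdot v_i=0$ for all $i=2,\dots,k$ (a separation preserving projection) such that, after projecting along $w$, the sets $P'_-$ and $P'_+$ are not strictly linearly separable.
   Context: For a finite $P\subset\mathbb{R}^d$ with properties $a_i\colon P\to\{-1,1\}$, write $P^i_{\pm}=\{p\in P: a_i(p)=\pm1\}$ and $P_\pm=P^1_\pm$. The label of $p$ is $(a_1(p),\dots,a_k(p))$. Projection along a unit vector $w$: $p'=p-(p\cdot w)w\in w^\perp$; $X'$ is the image of $X$. Two finite sets $X,Y$ in a linear subspace $L$ are strictly linearly separable (in $L$) if there exist a unit $v\in L$ and $c$ with $v\cdot x<c<v\cdot y$ for all $x\in X,y\in Y$; for projected sets $L=w^\perp$. A property $a_i$ is strictly linearly separable on $P$ if $P^i_-$ and $P^i_+$ are. A projection along $w$ is called separation preserving (with respect to the fixed hyperplanes $H_2,\dots,H_k$) if $w$ is orthogonal to all normals $v_2,\dots,v_k$. *)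

theory Defs
  imports "HOL-Analysis.Analysis"
begin

definition proj_along :: "'a::euclidean_space \<Rightarrow> 'a \<Rightarrow> 'a" where
  "proj_along w p = p - (p \<bullet> w) *\<^sub>R w"

definition strictly_lin_sep_in :: "'a::euclidean_space set \<Rightarrow> 'a set \<Rightarrow> 'a set \<Rightarrow> bool" where
  "strictly_lin_sep_in L X Y \<longleftrightarrow>
     (\<exists>v c. v \<in> L \<and> norm v = 1 \<and> (\<forall>x\<in>X. v \<bullet> x < c) \<and> (\<forall>y\<in>Y. c < v \<bullet> y))"

definition orth_proj_span :: "'a::euclidean_space set \<Rightarrow> 'a \<Rightarrow> 'a" where
  "orth_proj_span V x = (THE y. y \<in> span V \<and> (\<forall>z\<in>span V. (x - y) \<bullet> z = 0))"

end

theory Submission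
  imports Defs
begin

lemma hull_sep:
  fixes u :: "'a::euclidean_space"
  assumes "\<forall>x\<in>X. u \<bullet> x < e" "\<forall>y\<in>Y. e < u \<bullet> y" "x \<in> convex hull X" "y \<in> convex hull Y"
  shows "u \<bullet> (x - y) < 0"
proof -
  have "convex hull X \<subseteq> {x. u \<bullet> x < e}"
    by (rule hull_minimal) (use assms(1) convex_halfspace_lt in auto)
  moreover have "convex hull Y \<subseteq> {x. u \<bullet> x > e}"
    by (rule hull_minimal) (use assms(2) convex_halfspace_gt in auto)
  ultimately have "u \<bullet> x < e" "e < u \<bullet> y" using assms(3,4) by auto
  then show ?thesis by (simp add: inner_diff_right)
qed

theorem mainTheorem3:
  fixes P :: "'a::euclidean_space set"
    and k :: nat
    and a :: "nat \<Rightarrow> 'a \<Rightarrow> int"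
    and v :: "nat \<Rightarrow> 'a"
    and c :: "nat \<Rightarrow> real"
  assumes k_bounds: "2 \<le> k" "k \<le> DIM('a)"
    and finP: "finite P"
    and a_vals: "\<And>i p. i \<in> {1..k} \<Longrightarrow> p \<in> P \<Longrightarrow> a i p \<in> {-1, 1}"
    and a_sep: "\<And>i. i \<in> {1..k} \<Longrightarrow>
        strictly_lin_sep_in UNIV {p\<in>P. a i p = -1} {p\<in>P. a i p = 1}"
    and labels: "\<And>l. (\<forall>i\<in>{1..k}. l i \<in> {-1::int, 1}) \<Longrightarrow>
        (\<exists>p\<in>P. \<forall>i\<in>{1..k}. a i p = l i)"
    and H_sep: "\<And>i. i \<in> {2..k} \<Longrightarrow>
        (\<forall>p\<in>P. a i p = -1 \<longrightarrow> v i \<bullet> p < c i) \<and> (\<forall>p\<in>P. a i p = 1 \<longrightarrow> c i < v i \<bullet> p)"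
    and v_indep: "inj_on v {2..k}" "independent (v ` {2..k})"
    and P_gen: "\<And>S. S \<subseteq> P \<Longrightarrow> card S \<le> DIM('a) + 1 \<Longrightarrow> \<not> affine_dependent S"
    and T_gen: "\<And>S. S \<subseteq> P \<Longrightarrow> card S \<le> k \<Longrightarrow>
        inj_on (orth_proj_span (v ` {2..k})) S \<and>
        \<not> affine_dependent (orth_proj_span (v ` {2..k}) ` S)"
  shows "\<exists>w. norm w = 1 \<and> (\<forall>i\<in>{2..k}. w \<bullet> v i = 0) \<and>
     \<not> strictly_lin_sep_in {x. x \<bullet> w = 0}
         (proj_along w ` {p\<in>P. a 1 p = -1}) (proj_along w ` {p\<in>P. a 1 p = 1})"
  proof -
  define Pm where "Pm = {p\<in>P. a 1 p = -1}"
  define Pp where "Pp = {p\<in>P. a 1 p = 1}"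
  define K where "K = (\<Union>x\<in>convex hull Pm. \<Union>y\<in>convex hull Pp. {x - y})"
  define N where "N = {x. \<forall>i\<in>{2..k}. x \<bullet> v i = 0}"
  define B where "B = (\<Union>z\<in>K. \<Union>n\<in>N. {z + n})"
  have finPm: "finite Pm" "finite Pp" using finP by (auto simp: Pm_def Pp_def)
  have cK: "compact K" unfolding K_def
    by (rule compact_differences') (use finPm finite_imp_compact_convex_hull in auto)
  have sN: "subspace N" unfolding subspace_def N_def by (auto simp: inner_add_left)
  have cB: "closed B" unfolding B_def
    by (rule compact_closed_sums[OF cK closed_subspace[OF sN]])
  have vB: "convex B" unfolding B_def
    by (rule convex_sums) (auto simp: K_def intro!: convex_differences subspace_imp_convex[OF sN])
  obtain v0 c0 where v0: "\<forall>x\<in>Pm. v0 \<bullet> x < c0" "\<forall>y\<in>Pp. c0 < v0 \<bullet> y"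
    using a_sep[of 1] k_bounds unfolding strictly_lin_sep_in_def Pm_def Pp_def by auto
  have Kneg: "\<And>z. z \<in> K \<Longrightarrow> v0 \<bullet> z < 0"
    unfolding K_def using hull_sep[OF v0] by auto
  obtain pm where pm: "pm \<in> Pm"
  proof -
    obtain p where "p \<in> P" and pl: "\<forall>i\<in>{1..k}. a i p = -1" using labels[of "\<lambda>i. -1"] by auto
    have one: "(1::nat) \<in> {1..k}" using k_bounds by auto
    have "a 1 p = -1" using bspec[OF pl one] .
    then show ?thesis using that \<open>p \<in> P\<close> by (simp add: Pm_def)
  qed
  obtain pp where pp: "pp \<in> Pp"
  proof -
    obtain p where "p \<in> P" and pl: "\<forall>i\<in>{1..k}. a i p = 1" using labels[of "\<lambda>i. 1"] by auto
    have one: "(1::nat) \<in> {1..k}" using k_bounds by auto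
    have "a 1 p = 1" using bspec[OF pl one] .
    then show ?thesis using that \<open>p \<in> P\<close> by (simp add: Pp_def)
  qed
  have Kmem: "x - y \<in> K" if "x \<in> convex hull Pm" "y \<in> convex hull Pp" for x y
    unfolding K_def using that by blast
  have pmK: "pm - pp \<in> K" using Kmem pm pp hull_subset[of Pm] hull_subset[of Pp] by blast
  show ?thesis
  proof (cases "0 \<in> B")
    case True
    then obtain z n where zn: "z \<in> K" "n \<in> N" "0 = z + n" unfolding B_def by auto
    have "z = - n" using zn(3)[symmetric] by (simp add: eq_neg_iff_add_eq_0)
    then have zN: "z \<in> N" using zn(2) sN by (simp add: subspace_neg)
    have z0: "z \<noteq> 0" using Kneg[OF zn(1)] by auto
    define w where "w = z /\<^sub>R norm z"
    have nw: "norm w = 1" using z0 by (simp add: w_def)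
    have wv: "\<forall>i\<in>{2..k}. w \<bullet> v i = 0" using zN by (simp add: w_def N_def)
    have "\<not> strictly_lin_sep_in {x. x \<bullet> w = 0} (proj_along w ` Pm) (proj_along w ` Pp)"
    proof
      assume "strictly_lin_sep_in {x. x \<bullet> w = 0} (proj_along w ` Pm) (proj_along w ` Pp)"
      then obtain u e where u: "u \<bullet> w = 0" "\<forall>x\<in>proj_along w ` Pm. u \<bullet> x < e"
          "\<forall>y\<in>proj_along w ` Pp. e < u \<bullet> y"
        unfolding strictly_lin_sep_in_def by auto
      have pr: "u \<bullet> proj_along w p = u \<bullet> p" for p
        using u(1) by (simp add: proj_along_def inner_diff_right inner_commute)
      have "\<forall>x\<in>Pm. u \<bullet> x < e" "\<forall>y\<in>Pp. e < u \<bullet> y" using u(2,3) pr by auto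
      moreover obtain x y where "x \<in> convex hull Pm" "y \<in> convex hull Pp" "z = x - y"
        using zn(1) unfolding K_def by blast
      ultimately have "u \<bullet> z < 0" using hull_sep[of Pm u e Pp x y] by simp
      moreover have "u \<bullet> z = 0"
        using u(1) z0 by (simp add: w_def)
      ultimately show False by simp
    qed
    then show ?thesis using nw wv by (auto simp: Pm_def Pp_def)
  next
    case False
    then obtain u b where ub: "0 < b" "\<forall>x\<in>B. u \<bullet> x > b"
      using separating_hyperplane_closed_0[OF vB cB] by auto
    have uN: "u \<bullet> n = 0" if n: "n \<in> N" for n
    proof (rule ccontr)
      assume ne: "u \<bullet> n \<noteq> 0"
      define t where "t = - (\<bar>u \<bullet> (pm - pp)\<bar> + 1) / (u \<bullet> n)"
      have "t *\<^sub>R n \<in> N" using sN n by (simp add: subspace_scale)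
      then have "(pm - pp) + t *\<^sub>R n \<in> B" unfolding B_def using pmK by blast
      then have "u \<bullet> ((pm - pp) + t *\<^sub>R n) > b" using ub by auto
      moreover have "u \<bullet> ((pm - pp) + t *\<^sub>R n) = u \<bullet> (pm - pp) - (\<bar>u \<bullet> (pm - pp)\<bar> + 1)"
        using ne by (simp add: t_def inner_add_right)
      ultimately show False using ub(1) by linarith
    qed
    obtain y z where yz: "y \<in> span (v ` {2..k})" "\<And>w. w \<in> span (v ` {2..k}) \<Longrightarrow> orthogonal z w" "u = y + z"
      using orthogonal_subspace_decomp_exists[of "v ` {2..k}" u] by metis
    have "z \<in> N" unfolding N_def
    proof safe
      fix i assume "i \<in> {2..k}"
      then have "v i \<in> span (v ` {2..k})" by (simp add: span_base)
      then show "z \<bullet> v i = 0" using yz(2) unfolding orthogonal_def by blast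
    qed
    then have "u \<bullet> z = 0" using uN by auto
    moreover have "y \<bullet> z = 0" using yz(1,2) by (simp add: orthogonal_def inner_commute)
    ultimately have "z \<bullet> z = 0" using yz(3) by (simp add: inner_add_left)
    then have "u = y" using yz(3) by simp
    then obtain f where f: "u = (\<Sum>x\<in>v ` {2..k}. f x *\<^sub>R x)"
      using yz(1) span_finite[of "v ` {2..k}"] by auto
    define lam where "lam i = f (v i)" for i
    have ulam: "u = (\<Sum>i\<in>{2..k}. lam i *\<^sub>R v i)"
      using f v_indep(1) by (simp add: sum.reindex lam_def)
    have uinner: "u \<bullet> p = (\<Sum>i\<in>{2..k}. lam i * (v i \<bullet> p))" for p
      unfolding ulam by (simp add: inner_sum_left)
    define C where "C = (\<Sum>i\<in>{2..k}. lam i * c i)"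
    obtain p where p: "p \<in> P" "\<forall>i\<in>{1..k}. a i p = (if i = 1 then -1 else if lam i \<ge> 0 then -1 else 1)"
    proof -
      have "\<forall>i\<in>{1..k}. (if i = 1 then -1 else if lam i \<ge> 0 then -1 else 1) \<in> {-1::int, 1}" by auto
      then show ?thesis using labels[of "\<lambda>i. if i = 1 then -1 else if lam i \<ge> 0 then -1 else 1"] that by blast
    qed
    obtain q where q: "q \<in> P" "\<forall>i\<in>{1..k}. a i q = (if i = 1 then 1 else if lam i \<ge> 0 then 1 else -1)"
    proof -
      have "\<forall>i\<in>{1..k}. (if i = 1 then 1 else if lam i \<ge> 0 then 1 else -1) \<in> {-1::int, 1}" by auto
      then show ?thesis using labels[of "\<lambda>i. if i = 1 then 1 else if lam i \<ge> 0 then 1 else -1"] that by blast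
    qed
    have "u \<bullet> p \<le> C" unfolding uinner C_def
    proof (rule sum_mono)
      fix i assume i: "i \<in> {2..k}"
      then have ai: "a i p = (if lam i \<ge> 0 then -1 else 1)" using p(2) by auto
      show "lam i * (v i \<bullet> p) \<le> lam i * c i"
      proof (cases "lam i \<ge> 0")
        case True
        then have h: "v i \<bullet> p < c i" using H_sep[OF i] p(1) ai by auto
        show ?thesis using mult_left_mono[OF less_imp_le[OF h] True] by simp
      next
        case False
        then have h: "c i < v i \<bullet> p" using H_sep[OF i] p(1) ai by auto
        show ?thesis using mult_left_mono_neg[OF less_imp_le[OF h]] False by simp
      qed
    qed
    moreover have "C \<le> u \<bullet> q" unfolding uinner C_def
    proof (rule sum_mono)
      fix i assume i: "i \<in> {2..k}"
      then have ai: "a i q = (if lam i \<ge> 0 then 1 else -1)" using q(2) by auto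
      show "lam i * c i \<le> lam i * (v i \<bullet> q)"
      proof (cases "lam i \<ge> 0")
        case True
        then have h: "c i < v i \<bullet> q" using H_sep[OF i] q(1) ai by auto
        show ?thesis using mult_left_mono[OF less_imp_le[OF h] True] by simp
      next
        case False
        then have h: "v i \<bullet> q < c i" using H_sep[OF i] q(1) ai by auto
        show ?thesis using mult_left_mono_neg[OF less_imp_le[OF h]] False by simp
      qed
    qed
    moreover have "p - q \<in> B"
    proof -
      have "p \<in> Pm" "q \<in> Pp" using p q k_bounds by (auto simp: Pm_def Pp_def)
      then have "p - q \<in> K" using Kmem hull_subset[of Pm] hull_subset[of Pp] by blast
      moreover have "(0::'a) \<in> N" using subspace_0[OF sN] .
      ultimately have "(p - q) + 0 \<in> B" unfolding B_def by blast
      then show ?thesis by simp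
    qed
    then have "u \<bullet> (p - q) > 0" using ub by (meson less_trans)
    ultimately show ?thesis by (simp add: inner_diff_right)
  qed
qed

end
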